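(* Let $n\ge2$ and $1\le s<\ell$ be integers, and consider the saturation SQGT model with thresholds $(1,2,\dots,s)$, in which a test $\mathbf{x}\in\{0,1\}^n$ applied to $\mathbf{b}$ returns $\min(\mathbf{x}\cdot\mathbf{b},s)$. Then there exists a binary test matrix $\mathbf{C}$ with $n$ columns and at most $\frac{2\ell}{s}+2\log_2 n+3$ rows that solves $\mathrm{Burst}(n,\le\ell,\underline{\eta})$, i.e. any two distinct bursts in $\{0,1\}^n$ of lengths between $1$ and $\ell$ yield distinct outcome vectors.
   Context: Items are indexed $0,\dots,n-1$. A burst with head $a$ and tail $t$ ($0\le a\le t\le n-1$) is the vector in $\{0,1\}^n$ whose $j$-th coordinate is $1$ iff $a\le j\le t$; its length is $t-a+1$. $\mathrm{Burst}(n,\le\ell,\underline{\eta})$ is the problem of identifying an unknown burst of length in $\{1,\dots,\ell\}$ from the outcome vector (entrywise outcomes of the rows of the test matrix). *)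

theory Defs
  imports Complex_Main
begin

definition burst :: "nat \<Rightarrow> nat \<Rightarrow> nat \<Rightarrow> bool list" where
  "burst n a t = map (\<lambda>j. a \<le> j \<and> j \<le> t) [0..<n]"

definition valid_burst :: "nat \<Rightarrow> nat \<Rightarrow> nat \<Rightarrow> nat \<Rightarrow> bool" where
  "valid_burst n l a t \<longleftrightarrow> a \<le> t \<and> t < n \<and> t - a + 1 \<le> l"

definition bdot :: "bool list \<Rightarrow> bool list \<Rightarrow> nat" where
  "bdot x b = length (filter (\<lambda>(u, v). u \<and> v) (zip x b))"

definition sat_outcome :: "nat \<Rightarrow> bool list \<Rightarrow> bool list \<Rightarrow> nat" where
  "sat_outcome s x b = min (bdot x b) s"

definition outcome_vec :: "nat \<Rightarrow> bool list list \<Rightarrow> bool list \<Rightarrow> nat list" where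
  "outcome_vec s C b = map (\<lambda>x. sat_outcome s x b) C"

definition solves_burst :: "nat \<Rightarrow> nat \<Rightarrow> nat \<Rightarrow> bool list list \<Rightarrow> bool" where
  "solves_burst n l s C \<longleftrightarrow>
     (\<forall>a t a' t'. valid_burst n l a t \<longrightarrow> valid_burst n l a' t' \<longrightarrow>
        burst n a t \<noteq> burst n a' t' \<longrightarrow>
        outcome_vec s C (burst n a t) \<noteq> outcome_vec s C (burst n a' t'))"

end

theory Submission
  imports Defs
begin
definition cnt :: "(nat\<Rightarrow>bool) \<Rightarrow> nat \<Rightarrow> nat \<Rightarrow> nat" where
 "cnt P a t = card {j. a \<le> j \<and> j \<le> t \<and> P j}"

lemma bdot_row: "t < n \<Longrightarrow> bdot (map P [0..<n]) (burst n a t) = cnt P a t"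
  unfolding bdot_def burst_def cnt_def
  apply (simp add: zip_map_map zip_same_conv_map o_def distinct_length_filter)
  apply (rule arg_cong[where f=card])
  by auto

lemma cnt_finite: "finite {j::nat. a \<le> j \<and> j \<le> t \<and> P j}"
  by (rule finite_subset[of _ "{a..t}"]) auto

lemma cnt_pos: "0 < cnt P a t \<longleftrightarrow> (\<exists>j. a \<le> j \<and> j \<le> t \<and> P j)"
  unfolding cnt_def using cnt_finite[of a t P] by (auto simp: card_gt_0_iff)

lemma cnt_le_len: "cnt P a t \<le> t + 1 - a"
  unfolding cnt_def
proof -
  have "card {j. a \<le> j \<and> j \<le> t \<and> P j} \<le> card {a..t}"
    by (rule card_mono) auto
  thus "card {j. a \<le> j \<and> j \<le> t \<and> P j} \<le> t + 1 - a" by simp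
qed

lemma mod_eq_close: "(x::nat) mod M = y mod M \<Longrightarrow> x \<le> y \<Longrightarrow> y - x < M \<Longrightarrow> x = y"
  by (metis mod_eq_dvd_iff_nat nat_dvd_not_less order_le_imp_less_or_eq zero_less_diff)

lemma lt_div_helper: "(s::nat) \<ge> 1 \<Longrightarrow> x < s * (x div s) + s"
proof -
  assume "s \<ge> 1"
  have "x = s*(x div s) + x mod s" by simp
  moreover have "x mod s < s" using \<open>s \<ge> 1\<close> by simp
  ultimately show "x < s * (x div s) + s" by linarith
qed

lemma card_div_eq: "(s::nat) \<ge> 1 \<Longrightarrow> card {j. j div s = q} = s"
proof -
  assume "s \<ge> 1"
  have "{j. j div s = q} = {q*s..<q*s+s}"
    using \<open>s \<ge> 1\<close> by (auto simp: div_nat_eqI mult.commute lt_div_helper)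
  thus ?thesis by simp
qed

lemma div_diff_bound: "(a::nat) \<le> t \<Longrightarrow> t div s \<le> a div s + (t - a) div s + 1"
proof -
  assume "a \<le> t"
  have e: "t div s = a div s + (t-a) div s + (a mod s + (t-a) mod s) div s"
    using div_add1_eq[of a "t-a" s] \<open>a \<le> t\<close> by simp
  have "(a mod s + (t-a) mod s) div s \<le> 1"
  proof (cases "s = 0")
    case False
    hence "a mod s + (t-a) mod s < 2 * s" by (simp add: add_strict_mono mult_2)
    hence "(a mod s + (t-a) mod s) div s < 2" by (simp add: less_mult_imp_div_less)
    thus ?thesis by simp
  qed simp
  thus ?thesis using e by linarith
qed

lemma sum_bits: "(x::nat) < 2^K \<Longrightarrow> x = (\<Sum>i<K. 2^i * (if odd (x div 2^i) then 1 else 0))"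
proof (induction K arbitrary: x)
  case 0 then show ?case by simp
next
  case (Suc K)
  have h: "x div 2 < 2^K" using Suc.prems by auto
  have "(\<Sum>i<Suc K. 2^i * (if odd (x div 2^i) then 1 else 0 :: nat))
     = (if odd x then 1 else 0) + (\<Sum>i<K. 2^(Suc i) * (if odd (x div 2^(Suc i)) then 1 else 0))"
    by (subst sum.lessThan_Suc_shift) simp
  also have "\<dots> = (if odd x then 1 else 0) + 2 * (\<Sum>i<K. 2^i * (if odd ((x div 2) div 2^i) then 1 else 0))"
    by (simp add: sum_distrib_left div_mult2_eq mult.assoc)
  also have "\<dots> = x" using Suc.IH[OF h] by presburger
  finally show ?case by simp
qed

definition SR :: "nat \<Rightarrow> nat \<Rightarrow> nat \<Rightarrow> nat \<Rightarrow> bool" where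
  "SR s M r j = ((j div s) mod M = r)"

lemma coarse_bound:
  fixes s a t M :: nat
  assumes "s \<ge> 1" "a \<le> t" "t - a < s*(M-2)"
  shows "t div s - a div s \<le> M - 2"
proof -
  have "(t - a) div s < M - 2" using assms by (simp add: less_mult_imp_div_less mult.commute)
  thus ?thesis using div_diff_bound[OF assms(2), of s] by linarith
qed

lemma SR_unique:
  assumes "t div s - a div s < M" "a \<le> j" "j \<le> t" "a \<le> j'" "j' \<le> t"
    "SR s M r j" "SR s M r j'"
  shows "j div s = j' div s"
proof -
  have m: "(j div s) mod M = (j' div s) mod M" using assms(6,7) by (simp add: SR_def)
  have b1: "a div s \<le> j div s" "j div s \<le> t div s" "a div s \<le> j' div s" "j' div s \<le> t div s"
    using assms by (simp_all add: div_le_mono)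
  show ?thesis
  proof (cases "j div s \<le> j' div s")
    case True thus ?thesis using mod_eq_close[OF m True] b1 assms(1) by linarith
  next
    case False thus ?thesis using mod_eq_close[OF m[symmetric]] b1 assms(1) by linarith
  qed
qed

lemma cnt_SR_le:
  assumes "s \<ge> 1" "t div s - a div s < M"
  shows "cnt (SR s M r) a t \<le> s"
proof (cases "{j. a \<le> j \<and> j \<le> t \<and> SR s M r j} = {}")
  case True thus ?thesis unfolding cnt_def True by simp
next
  case False
  then obtain j0 where j0: "a \<le> j0" "j0 \<le> t" "SR s M r j0" by auto
  have sub: "{j. a \<le> j \<and> j \<le> t \<and> SR s M r j} \<subseteq> {j. j div s = j0 div s}"
    using SR_unique[OF assms(2) _ _ j0(1,2) _ j0(3)] by auto
  have fin: "finite {j. j div s = j0 div s}"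
    using card_div_eq[OF assms(1), of "j0 div s"] assms(1) card_ge_0_finite by force
  have "card {j. a \<le> j \<and> j \<le> t \<and> SR s M r j} \<le> card {j. j div s = j0 div s}"
    by (rule card_mono[OF fin sub])
  thus ?thesis using card_div_eq[OF assms(1)] by (simp add: cnt_def)
qed

lemma cnt_SR_pos:
  assumes "s \<ge> 1" "a \<le> t"
  shows "0 < cnt (SR s M r) a t \<longleftrightarrow> r \<in> (\<lambda>q. q mod M) ` {a div s..t div s}"
proof
  assume "0 < cnt (SR s M r) a t"
  then obtain j where "a \<le> j" "j \<le> t" "SR s M r j" by (auto simp: cnt_pos)
  thus "r \<in> (\<lambda>q. q mod M) ` {a div s..t div s}"
    by (auto simp: SR_def div_le_mono intro!: image_eqI[where x="j div s"])
next
  assume "r \<in> (\<lambda>q. q mod M) ` {a div s..t div s}"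
  then obtain q where q: "a div s \<le> q" "q \<le> t div s" "r = q mod M" by auto
  show "0 < cnt (SR s M r) a t"
  proof (cases "q = a div s")
    case True thus ?thesis using q assms by (auto simp: cnt_pos SR_def)
  next
    case False
    hence "a div s + 1 \<le> q" using q by simp
    hence "(a div s + 1) * s \<le> q * s" by (rule mult_le_mono1)
    moreover have "(a div s + 1) * s = s * (a div s) + s" by (simp add: algebra_simps)
    ultimately have "a < q * s" using lt_div_helper[OF assms(1), of a] by linarith
    moreover have "q * s \<le> t"
    proof -
      have "q * s \<le> t div s * s" using q(2) by (rule mult_le_mono1)
      also have "\<dots> \<le> t" by (simp add: div_times_less_eq_dividend)
      finally show ?thesis .
    qed
    moreover have "(q * s) div s = q" using assms(1) by simp
    ultimately show ?thesis using q by (auto simp: cnt_pos SR_def intro!: exI[where x="q*s"])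
  qed
qed

lemma sum_SR:
  assumes "M > 0"
  shows "(\<Sum>r<M. cnt (SR s M r) a t) = t + 1 - a"
proof -
  have "(\<Sum>r<M. cnt (SR s M r) a t) = (\<Sum>r\<in>{..<M}. sum (\<lambda>_. 1::nat) {x \<in> {a..t}. (\<lambda>j. j div s mod M) x = r})"
    unfolding cnt_def SR_def by (intro sum.cong refl) (auto intro!: arg_cong[where f=card])
  also have "\<dots> = sum (\<lambda>_. 1::nat) {a..t}"
    by (rule sum.group) (use assms in auto)
  finally show ?thesis by simp
qed

lemma cnt_first:
  assumes "s \<ge> 1" "a \<le> t" "t div s - a div s < M" "a div s < t div s"
  shows "cnt (SR s M (a div s mod M)) a t = s - a mod s"
proof -
  have e: "{j. a \<le> j \<and> j \<le> t \<and> SR s M (a div s mod M) j} = {a..<(a div s)*s + s}"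
  proof (rule set_eqI, rule iffI)
    fix j assume j: "j \<in> {j. a \<le> j \<and> j \<le> t \<and> SR s M (a div s mod M) j}"
    hence "j div s = a div s" using SR_unique[OF assms(3), of j a] assms(2) by (auto simp: SR_def)
    moreover have "j < s * (j div s) + s" using lt_div_helper[OF assms(1), of j] .
    ultimately have "j < (a div s) * s + s" by (simp add: mult.commute)
    thus "j \<in> {a..<(a div s)*s + s}" using j by simp
  next
    fix j assume j: "j \<in> {a..<(a div s)*s + s}"
    have "a div s + 1 \<le> t div s" using assms(4) by simp
    hence "(a div s + 1) * s \<le> t div s * s" by (rule mult_le_mono1)
    also have "\<dots> \<le> t" by (simp add: div_times_less_eq_dividend)
    finally have "j \<le> t" using j by simp
    moreover have "j div s = a div s"
    proof -
      have "s * (a div s) \<le> a" by (simp add: mult.commute div_times_less_eq_dividend)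
      moreover have "a \<le> j" using j by simp
      ultimately have l1: "s * (a div s) \<le> j" by linarith
      have l2: "j < s * Suc (a div s)" using j by (simp add: mult.commute)
      show ?thesis by (rule div_nat_eqI[OF l1 l2])
    qed
    ultimately show "j \<in> {j. a \<le> j \<and> j \<le> t \<and> SR s M (a div s mod M) j}" using j by (simp add: SR_def)
  qed
  have "a div s * s + a mod s = a" by (rule div_mult_mod_eq)
  moreover have "a mod s < s" using assms(1) by simp
  moreover have "card {a..<(a div s)*s + s} = (a div s)*s + s - a" by simp
  ultimately show ?thesis unfolding cnt_def e by linarith
qed

lemma cnt_single:
  assumes "a \<le> t" "a div s = t div s"
  shows "cnt (SR s M (a div s mod M)) a t = t + 1 - a"
proof -
  have "{j. a \<le> j \<and> j \<le> t \<and> SR s M (a div s mod M) j} = {a..t}"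
  proof (auto simp: SR_def)
    fix j assume "a \<le> j" "j \<le> t"
    hence "a div s \<le> j div s" "j div s \<le> t div s" by (simp_all add: div_le_mono)
    thus "j div s mod M = a div s mod M" using assms by simp
  qed
  thus ?thesis by (simp add: cnt_def)
qed

lemma start_char:
  fixes M qa qt x :: nat
  assumes "M > 0" "qa \<le> qt" "qt - qa + 1 < M"
  shows "(x \<in> (\<lambda>q. q mod M) ` {qa..qt} \<and> (\<forall>z\<in>(\<lambda>q. q mod M) ` {qa..qt}. (z + 1) mod M \<noteq> x))
         \<longleftrightarrow> x = qa mod M"
proof
  assume h: "x \<in> (\<lambda>q. q mod M) ` {qa..qt} \<and> (\<forall>z\<in>(\<lambda>q. q mod M) ` {qa..qt}. (z + 1) mod M \<noteq> x)"
  then obtain q where q: "qa \<le> q" "q \<le> qt" "x = q mod M" by auto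
  show "x = qa mod M"
  proof (rule ccontr)
    assume "x \<noteq> qa mod M"
    hence "q \<noteq> qa" using q by auto
    hence "qa \<le> q - 1" "q - 1 \<le> qt" using q by auto
    hence "(q - 1) mod M \<in> (\<lambda>q. q mod M) ` {qa..qt}" by auto
    moreover have "((q - 1) mod M + 1) mod M = x"
    proof -
      have "Suc (q - 1) = q" using q \<open>q \<noteq> qa\<close> by auto
      thus ?thesis using q by (simp add: mod_Suc_eq)
    qed
    ultimately show False using h by blast
  qed
next
  assume x: "x = qa mod M"
  show "x \<in> (\<lambda>q. q mod M) ` {qa..qt} \<and> (\<forall>z\<in>(\<lambda>q. q mod M) ` {qa..qt}. (z + 1) mod M \<noteq> x)"
  proof
    show "x \<in> (\<lambda>q. q mod M) ` {qa..qt}" using x assms by auto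
  next
    show "\<forall>z\<in>(\<lambda>q. q mod M) ` {qa..qt}. (z + 1) mod M \<noteq> x"
    proof
      fix z assume "z \<in> (\<lambda>q. q mod M) ` {qa..qt}"
      then obtain y where y: "y \<in> {qa..qt}" "z = y mod M" by auto
      show "(z + 1) mod M \<noteq> x"
      proof
      assume "(z + 1) mod M = x"
      hence "qa mod M = (y + 1) mod M" using x y(2) by (simp add: mod_Suc_eq)
      moreover have "qa \<le> y + 1" "y + 1 - qa < M" using y assms by auto
      ultimately have "qa = y + 1" using mod_eq_close[of qa M "y+1"] by auto
      thus False using y by auto
    qed
    qed
  qed
qed

lemma coarse_id:
  fixes M qa qt qa' qt' :: nat
  assumes "M > 0" "qa \<le> qt" "qt - qa + 1 < M" "qa' \<le> qt'" "qt' - qa' + 1 < M"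
    and eq: "(\<lambda>q. q mod M) ` {qa..qt} = (\<lambda>q. q mod M) ` {qa'..qt'}"
  shows "qt - qa = qt' - qa' \<and> qa mod M = qa' mod M"
proof
  have inj: "inj_on (\<lambda>q. q mod M) {x..y}" if "y - x + 1 < M" for x y :: nat
  proof (rule inj_onI)
    fix u v assume uv: "u \<in> {x..y}" "v \<in> {x..y}" "u mod M = v mod M"
    show "u = v"
    proof (cases "u \<le> v")
      case True thus ?thesis using mod_eq_close[OF uv(3) True] uv that by auto
    next
      case False
      hence "v \<le> u" "u - v < M" using uv that by auto
      thus ?thesis using mod_eq_close[OF uv(3)[symmetric]] by auto
    qed
  qed
  have "card ((\<lambda>q. q mod M) ` {qa..qt}) = qt + 1 - qa"
    using card_image[OF inj[OF assms(3)]] by simp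
  moreover have "card ((\<lambda>q. q mod M) ` {qa'..qt'}) = qt' + 1 - qa'"
    using card_image[OF inj[OF assms(5)]] by simp
  ultimately show "qt - qa = qt' - qa'" using eq assms by simp
next
  show "qa mod M = qa' mod M"
    using start_char[OF assms(1-3), of "qa mod M"] start_char[OF assms(1,4,5), of "qa mod M"] eq
    by simp
qed

lemma div2_Suc: "(x::nat) div 2^(Suc i) = (x div 2) div 2^i"
  by (simp add: power_Suc div_mult2_eq)

definition pat :: "nat \<Rightarrow> nat \<Rightarrow> nat \<Rightarrow> bool \<times> bool" where
  "pat q d i = ((odd (q div 2^i) \<or> odd ((q+d) div 2^i)), (even (q div 2^i) \<or> even ((q+d) div 2^i)))"

lemma pair_id:
  fixes q d q' d' :: nat
  shows "d \<le> 1 \<Longrightarrow> d' \<le> 1 \<Longrightarrow> q + d < 2^K \<Longrightarrow> q' + d' < 2^K \<Longrightarrow>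
    (\<forall>i<K. pat q d i = pat q' d' i) \<Longrightarrow> q = q' \<and> d = d'"
proof (induction K arbitrary: q d q' d')
  case 0 thus ?case by simp
next
  case (Suc K)
  have h0: "pat q d 0 = pat q' d' 0" using Suc.prems(5) by simp
  have both: "((odd q \<or> odd (q+d)) \<and> (even q \<or> even (q+d))) \<longleftrightarrow> d = 1" if "d \<le> 1" for q d :: nat
    using that by (cases "d = 0") auto
  have d1: "(d = 1) = (d' = 1)" using h0 both[OF Suc.prems(1), of q] both[OF Suc.prems(2), of q']
    by (simp add: pat_def)
  have dd: "d = d'" using d1 Suc.prems(1,2) by (cases "d = 1") auto
  define e where "e = (q mod 2 + d) div 2"
  define e' where "e' = (q' mod 2 + d') div 2"
  have ee: "(q + d) div 2 = q div 2 + e" "(q' + d') div 2 = q' div 2 + e'"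
    using Suc.prems(1,2) div_add1_eq[of q d 2] div_add1_eq[of q' d' 2] unfolding e_def e'_def by (auto simp: le_Suc_eq)
  have e1: "e \<le> 1" "e' \<le> 1" unfolding e_def e'_def using Suc.prems(1,2) by auto
  have b: "q div 2 + e < 2^K" "q' div 2 + e' < 2^K"
    using Suc.prems(3,4) ee by auto
  have "\<forall>i<K. pat (q div 2) e i = pat (q' div 2) e' i"
  proof (intro allI impI)
    fix i assume "i < K"
    hence "pat q d (Suc i) = pat q' d' (Suc i)" using Suc.prems(5) by simp
    thus "pat (q div 2) e i = pat (q' div 2) e' i"
      unfolding pat_def div2_Suc[of q] div2_Suc[of "q+d"] div2_Suc[of q'] div2_Suc[of "q'+d'"] ee .
  qed
  from Suc.IH[OF e1 b this] have ih: "q div 2 = q' div 2" "e = e'" by auto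
  have "q mod 2 = q' mod 2"
  proof (cases "d = 0")
    case True
    hence "odd q = odd q'" using h0 dd by (simp add: pat_def)
    thus ?thesis by (simp add: mod2_eq_if)
  next
    case False
    hence "d = 1" "d' = 1" using Suc.prems(1) dd by auto
    hence "e = q mod 2" "e' = q' mod 2" unfolding e_def e'_def by auto
    thus ?thesis using ih by simp
  qed
  moreover have "q = 2 * (q div 2) + q mod 2" "q' = 2 * (q' div 2) + q' mod 2" by simp_all
  ultimately have "q = q'" using ih by simp
  thus ?case using dd by simp
qed

lemma cnt_block_pos:
  fixes W a t :: nat
  assumes "a \<le> t" "t div W \<le> a div W + 1"
  shows "0 < cnt (\<lambda>j. R (j div W)) a t \<longleftrightarrow> R (a div W) \<or> R (t div W)"
proof
  assume "0 < cnt (\<lambda>j. R (j div W)) a t"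
  then obtain j where j: "a \<le> j" "j \<le> t" "R (j div W)" by (auto simp: cnt_pos)
  have "a div W \<le> j div W" "j div W \<le> t div W" using j by (simp_all add: div_le_mono)
  hence "j div W = a div W \<or> j div W = t div W" using assms(2) by linarith
  thus "R (a div W) \<or> R (t div W)" using j(3) by auto
next
  assume "R (a div W) \<or> R (t div W)"
  thus "0 < cnt (\<lambda>j. R (j div W)) a t" using assms(1) by (auto simp: cnt_pos)
qed

definition BB :: "nat \<Rightarrow> nat \<Rightarrow> nat \<Rightarrow> bool" where
  "BB s i j = odd ((j mod s) div 2^i)"

lemma B_sum:
  assumes "\<forall>j. a \<le> j \<and> j \<le> t \<longrightarrow> j mod s < 2^Ks"
  shows "(\<Sum>j\<in>{a..t}. j mod s) = (\<Sum>i<Ks. 2^i * cnt (BB s i) a t)"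
proof -
  have "(\<Sum>j\<in>{a..t}. j mod s) = (\<Sum>j\<in>{a..t}. \<Sum>i<Ks. 2^i * of_bool (BB s i j))"
  proof (rule sum.cong[OF refl])
    fix j assume "j \<in> {a..t}"
    hence "j mod s < 2^Ks" using assms by auto
    thus "j mod s = (\<Sum>i<Ks. 2^i * of_bool (BB s i j))"
      using sum_bits[of "j mod s" Ks] by (simp add: BB_def of_bool_def)
  qed
  also have "\<dots> = (\<Sum>i<Ks. \<Sum>j\<in>{a..t}. 2^i * of_bool (BB s i j))"
    by (rule sum.swap)
  also have "\<dots> = (\<Sum>i<Ks. 2^i * cnt (BB s i) a t)"
  proof (rule sum.cong[OF refl])
    fix i
    have "{a..t} \<inter> {j. BB s i j} = {j. a \<le> j \<and> j \<le> t \<and> BB s i j}" by auto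
    thus "(\<Sum>j\<in>{a..t}. 2^i * of_bool (BB s i j)) = 2^i * cnt (BB s i) a t"
      by (simp add: sum_distrib_left[symmetric] cnt_def)
  qed
  finally show ?thesis .
qed

lemma single_sum:
  fixes s a t :: nat
  assumes "s \<ge> 1" "a \<le> t" "a div s = t div s"
  shows "(\<Sum>j\<in>{a..t}. j mod s) = (t+1-a)*(a mod s) + (\<Sum>k\<in>{0..t-a}. k)"
proof -
  have "(\<Sum>j\<in>{a..t}. j mod s) = (\<Sum>j\<in>{a..t}. a mod s + (j - a))"
  proof (rule sum.cong[OF refl])
    fix j assume j: "j \<in> {a..t}"
    hence "a div s \<le> j div s" "j div s \<le> t div s" by (simp_all add: div_le_mono)
    hence "j div s = a div s" using assms by simp
    moreover have "j = s * (j div s) + j mod s" by simp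
    ultimately have "j = s * (a div s) + j mod s" by simp
    moreover have "a = s * (a div s) + a mod s" by simp
    moreover have "a \<le> j" using j by simp
    ultimately show "j mod s = a mod s + (j - a)" by linarith
  qed
  also have "\<dots> = (\<Sum>k\<in>{0..t-a}. a mod s + k)"
  proof -
    have "{a..t} = {0+a..(t-a)+a}" using assms(2) by simp
    hence "(\<Sum>j\<in>{a..t}. a mod s + (j - a)) = (\<Sum>k\<in>{0..t-a}. a mod s + ((k + a) - a))"
      by (simp only: sum.shift_bounds_cl_nat_ivl)
    thus ?thesis by simp
  qed
  also have "\<dots> = (t+1-a)*(a mod s) + (\<Sum>k\<in>{0..t-a}. k)"
    using assms(2) by (simp add: sum.distrib Suc_diff_le)
  finally show ?thesis .
qed

lemma min_s_pos: "(1::nat) \<le> s \<Longrightarrow> min x s = min y s \<Longrightarrow> (0 < x \<longleftrightarrow> 0 < y)"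
  by (cases "x \<le> s"; cases "y \<le> s") auto

lemma ident:
  fixes n l s M Ks K a t a' t' :: nat
  assumes s1: "1 \<le> s" and M3: "3 \<le> M" and lM: "l \<le> s*(M-2)"
    and v1: "valid_burst n l a t" and v2: "valid_burst n l a' t'"
    and Ksb: "min s n \<le> 2^Ks" and Kb: "(n-1) div (s*M) < 2^K"
    and hS: "\<forall>r<M. min (cnt (SR s M r) a t) s = min (cnt (SR s M r) a' t') s"
    and hB: "\<forall>i<Ks. min (cnt (BB s i) a t) s = min (cnt (BB s i) a' t') s"
    and hQ: "\<forall>i<K. min (cnt (\<lambda>j. odd ((j div (s*M)) div 2^i)) a t) s
                   = min (cnt (\<lambda>j. odd ((j div (s*M)) div 2^i)) a' t') s"
    and hN: "\<forall>i<K. min (cnt (\<lambda>j. even ((j div (s*M)) div 2^i)) a t) s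
                   = min (cnt (\<lambda>j. even ((j div (s*M)) div 2^i)) a' t') s"
  shows "a = a' \<and> t = t'"
proof -
  have b1: "a \<le> t" "t < n" "t - a + 1 \<le> l" and b2: "a' \<le> t'" "t' < n" "t' - a' + 1 \<le> l"
    using v1 v2 by (auto simp: valid_burst_def)
  have dl: "t - a < s*(M-2)" "t' - a' < s*(M-2)" using b1 b2 lM by linarith+
  have cb: "t div s - a div s \<le> M-2" "t' div s - a' div s \<le> M-2"
    using coarse_bound[OF s1 b1(1) dl(1)] coarse_bound[OF s1 b2(1) dl(2)] by auto
  have lt: "t div s - a div s < M" "t' div s - a' div s < M" using cb M3 by linarith+
  have qle: "a div s \<le> t div s" "a' div s \<le> t' div s" using b1 b2 by (simp_all add: div_le_mono)
  have cS: "cnt (SR s M r) a t = cnt (SR s M r) a' t'" if "r < M" for r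
    using hS[rule_format, OF that] cnt_SR_le[OF s1 lt(1), of r] cnt_SR_le[OF s1 lt(2), of r] by (simp add: min_absorb1)
  have M0: "M > 0" using M3 by simp
  have L: "t + 1 - a = t' + 1 - a'"
    using sum_SR[OF M0, of s a t] sum_SR[OF M0, of s a' t'] cS by simp
  have img: "(\<lambda>q. q mod M) ` {a div s..t div s} = (\<lambda>q. q mod M) ` {a' div s..t' div s}"
  proof (rule set_eqI)
    fix r
    show "r \<in> (\<lambda>q. q mod M) ` {a div s..t div s} \<longleftrightarrow> r \<in> (\<lambda>q. q mod M) ` {a' div s..t' div s}"
    proof (cases "r < M")
      case True thus ?thesis
        using cnt_SR_pos[OF s1 b1(1), of M r] cnt_SR_pos[OF s1 b2(1), of M r] cS[OF True] by simp
    next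
      case False thus ?thesis using M0 by auto
    qed
  qed
  have cid: "t div s - a div s = t' div s - a' div s \<and> a div s mod M = a' div s mod M"
    by (rule coarse_id[OF M0 qle(1) _ qle(2) _ img]) (use cb M3 in linarith)+
  have ams: "a mod s = a' mod s"
  proof (cases "a div s < t div s")
    case True
    hence True': "a' div s < t' div s" using cid qle by linarith
    have "s - a mod s = s - a' mod s"
      using cnt_first[OF s1 b1(1) lt(1) True] cnt_first[OF s1 b2(1) lt(2) True'] cS[of "a div s mod M"] cid M0
      by simp
    moreover have "a mod s < s" "a' mod s < s" using s1 by simp_all
    ultimately show ?thesis by linarith
  next
    case False
    hence e1: "a div s = t div s" using qle by simp
    hence e2: "a' div s = t' div s" using cid qle by linarith
    have Ls: "t + 1 - a \<le> s"
      using cnt_single[OF b1(1) e1, of M] cnt_SR_le[OF s1 lt(1), of "a div s mod M"] by simp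
    have cB: "cnt (BB s i) a t = cnt (BB s i) a' t'" if "i < Ks" for i
    proof -
      have "cnt (BB s i) a t \<le> s" "cnt (BB s i) a' t' \<le> s"
        using cnt_le_len[of "BB s i" a t] cnt_le_len[of "BB s i" a' t'] Ls L by linarith+
      thus ?thesis using hB[rule_format, OF that] by (simp add: min_absorb1)
    qed
    have bnd: "\<forall>j. x \<le> j \<and> j \<le> y \<longrightarrow> j mod s < 2^Ks" if "y < n" for x y
    proof (intro allI impI)
      fix j assume "x \<le> j \<and> j \<le> y"
      hence "j mod s < min s n" using s1 that
        by (metis le_less_trans min_less_iff_conj mod_less_divisor mod_less_eq_dividend less_le_trans zero_less_one)
      thus "j mod s < 2^Ks" using Ksb by linarith
    qed
    have "(\<Sum>j\<in>{a..t}. j mod s) = (\<Sum>j\<in>{a'..t'}. j mod s)"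
      using B_sum[OF bnd[OF b1(2)]] B_sum[OF bnd[OF b2(2)]] cB by simp
    moreover have "t - a = t' - a'" using L b1 b2 by linarith
    ultimately have "(t+1-a)*(a mod s) = (t+1-a)*(a' mod s)"
      using single_sum[OF s1 b1(1) e1] single_sum[OF s1 b2(1) e2] L by simp
    moreover have "t + 1 - a > 0" using b1 by simp
    ultimately show ?thesis by simp
  qed
  define W where "W = s * M"
  have amW: "a mod W = a' mod W"
    unfolding W_def using mod_mult2_eq[of a s M] mod_mult2_eq[of a' s M] cid ams by simp
  have W2: "s * (M - 2) \<le> W" unfolding W_def by simp
  have tw: "t div W \<le> a div W + 1" "t' div W \<le> a' div W + 1"
  proof -
    have "W > 0" unfolding W_def using s1 M3 by simp
    have "t \<le> a + W" "t' \<le> a' + W" using dl W2 b1 b2 by linarith+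
    hence "t div W \<le> (a + W) div W" "t' div W \<le> (a' + W) div W" by (simp_all add: div_le_mono)
    thus "t div W \<le> a div W + 1" "t' div W \<le> a' div W + 1" using \<open>W > 0\<close> by simp_all
  qed
  have wle: "a div W \<le> t div W" "a' div W \<le> t' div W" using b1 b2 by (simp_all add: div_le_mono)
  have pats: "\<forall>i<K. pat (a div W) (t div W - a div W) i = pat (a' div W) (t' div W - a' div W) i"
  proof (intro allI impI)
    fix i assume i: "i < K"
    have o: "(odd (a div W div 2^i) \<or> odd (t div W div 2^i)) = (odd (a' div W div 2^i) \<or> odd (t' div W div 2^i))"
      using cnt_block_pos[OF b1(1) tw(1), of "\<lambda>p. odd (p div 2^i)"]
        cnt_block_pos[OF b2(1) tw(2), of "\<lambda>p. odd (p div 2^i)"]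
        min_s_pos[OF s1 hQ[rule_format, OF i]] unfolding W_def by simp
    have e: "(even (a div W div 2^i) \<or> even (t div W div 2^i)) = (even (a' div W div 2^i) \<or> even (t' div W div 2^i))"
      using cnt_block_pos[OF b1(1) tw(1), of "\<lambda>p. even (p div 2^i)"]
        cnt_block_pos[OF b2(1) tw(2), of "\<lambda>p. even (p div 2^i)"]
        min_s_pos[OF s1 hN[rule_format, OF i]] unfolding W_def by simp
    show "pat (a div W) (t div W - a div W) i = pat (a' div W) (t' div W - a' div W) i"
      using o e wle by (simp add: pat_def)
  qed
  have tK: "t div W < 2^K" "t' div W < 2^K"
  proof -
    have "t div W \<le> (n-1) div W" "t' div W \<le> (n-1) div W" using b1 b2 by (simp_all add: div_le_mono)
    thus "t div W < 2^K" "t' div W < 2^K" using Kb unfolding W_def by linarith+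
  qed
  have "a div W = a' div W"
    using pair_id[of "t div W - a div W" "t' div W - a' div W" "a div W" K "a' div W"] pats tw wle tK
    by simp
  hence "a = a'" using amW by (metis div_mult_mod_eq)
  thus ?thesis using L b1 b2 by simp
qed

theorem mainTheorem10:
  fixes n s l :: nat
  assumes "n \<ge> 2" and "1 \<le> s" and "s < l"
  shows "\<exists>C :: bool list list.
           (\<forall>x \<in> set C. length x = n) \<and>
           real (length C) \<le> 2 * real l / real s + 2 * log 2 (real n) + 3 \<and>
           solves_burst n l s C"
proof -
  note s1 = assms(2)
  define M where "M = (l - 1) div s + 3"
  define Ks where "Ks = (LEAST k. min s n \<le> 2^k)"
  define K where "K = (LEAST k. (n-1) div (s*M) < 2^k)"
  define row :: "(nat \<Rightarrow> bool) \<Rightarrow> bool list" where "row = (\<lambda>P. map P [0..<n])"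
  define C where "C = map (\<lambda>r. row (SR s M r)) [0..<M] @ map (\<lambda>i. row (BB s i)) [0..<Ks]
     @ map (\<lambda>i. row (\<lambda>j. odd ((j div (s*M)) div 2^i))) [0..<K]
     @ map (\<lambda>i. row (\<lambda>j. even ((j div (s*M)) div 2^i))) [0..<K]"
  have M3: "3 \<le> M" unfolding M_def by simp
  have Ksb: "min s n \<le> 2^Ks" unfolding Ks_def
    by (rule LeastI[of _ "min s n"]) (simp add: less_imp_le)
  have Kb: "(n-1) div (s*M) < 2^K" unfolding K_def
    by (rule LeastI[of _ "(n-1) div (s*M)"]) simp
  have lM: "l \<le> s*(M-2)"
  proof -
    have "l - 1 < s * ((l-1) div s) + s" by (rule lt_div_helper[OF s1])
    moreover have "M - 2 = (l-1) div s + 1" unfolding M_def by simp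
    ultimately show ?thesis using assms(3) by (simp add: algebra_simps)
  qed
  have len: "length C = M + Ks + 2*K" by (simp add: C_def)
  have rows: "\<forall>x\<in>set C. length x = n" by (auto simp: C_def row_def)
  have solves: "solves_burst n l s C"
    unfolding solves_burst_def
  proof (intro allI impI)
    fix a t a' t'
    assume v1: "valid_burst n l a t" and v2: "valid_burst n l a' t'"
      and ne: "burst n a t \<noteq> burst n a' t'"
    show "outcome_vec s C (burst n a t) \<noteq> outcome_vec s C (burst n a' t')"
    proof
      assume eq: "outcome_vec s C (burst n a t) = outcome_vec s C (burst n a' t')"
      have all: "\<forall>x\<in>set C. min (bdot x (burst n a t)) s = min (bdot x (burst n a' t')) s"
        using eq unfolding outcome_vec_def sat_outcome_def by (simp add: map_eq_conv)
      have tn: "t < n" "t' < n" using v1 v2 by (auto simp: valid_burst_def)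
      have key: "min (cnt P a t) s = min (cnt P a' t') s" if "row P \<in> set C" for P
        using all[rule_format, OF that] bdot_row[OF tn(1), of P a] bdot_row[OF tn(2), of P a']
        by (simp add: row_def)
      have hS: "\<forall>r<M. min (cnt (SR s M r) a t) s = min (cnt (SR s M r) a' t') s"
        by (intro allI impI key) (auto simp: C_def)
      have hB: "\<forall>i<Ks. min (cnt (BB s i) a t) s = min (cnt (BB s i) a' t') s"
        by (intro allI impI key) (auto simp: C_def)
      have hQ: "\<forall>i<K. min (cnt (\<lambda>j. odd ((j div (s*M)) div 2^i)) a t) s
                   = min (cnt (\<lambda>j. odd ((j div (s*M)) div 2^i)) a' t') s"
        by (intro allI impI key) (auto simp: C_def)
      have hN: "\<forall>i<K. min (cnt (\<lambda>j. even ((j div (s*M)) div 2^i)) a t) s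
                   = min (cnt (\<lambda>j. even ((j div (s*M)) div 2^i)) a' t') s"
        by (intro allI impI key) (auto simp: C_def)
      have "a = a' \<and> t = t'"
        by (rule ident[OF s1 M3 lM v1 v2 Ksb Kb hS hB hQ hN])
      thus False using ne by simp
    qed
  qed
  have bound: "real (M + Ks + 2*K) \<le> 2 * real l / real s + 2 * log 2 (real n) + 3"
  proof -
    have spos: "real s > 0" using s1 by simp
    have n2: "real n \<ge> 2" using assms(1) by simp
    have logn: "log 2 (real n) \<ge> 1" using le_log2_of_power[of 1 n] assms(1) by simp
    have logs: "log 2 (real s) \<ge> 0" using le_log2_of_power[of 0 s] s1 by simp
    have Mr: "real M \<le> real (l-1) / real s + 3"
    proof -
      have "(l-1) div s * s \<le> l - 1" by (rule div_times_less_eq_dividend)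
      hence "real ((l-1) div s) * real s \<le> real (l-1)" by (metis of_nat_le_iff of_nat_mult)
      hence "real ((l-1) div s) \<le> real (l-1) / real s" using spos by (simp add: le_divide_eq)
      thus ?thesis unfolding M_def by simp
    qed
    have lfrac: "real (l-1) / real s \<le> 2 * real l / real s"
      using spos by (intro divide_right_mono) auto
    have minpos: "min s n \<ge> 1" using s1 assms(1) by simp
    have Ksr: "real Ks \<le> 1 + log 2 (real (min s n))"
    proof (cases "Ks = 0")
      case True thus ?thesis using le_log2_of_power[of 0 "min s n"] minpos by simp
    next
      case False
      hence "\<not> (min s n \<le> 2^(Ks-1))"
        using not_less_Least[of "Ks - 1" "\<lambda>k. min s n \<le> 2^k"] unfolding Ks_def by simp
      hence "2^(Ks-1) < min s n" by (simp only: not_le)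
      hence "real (Ks - 1) < log 2 (real (min s n))" by (rule less_log2_of_power)
      thus ?thesis using False by simp
    qed
    have mle: "log 2 (real (min s n)) \<le> log 2 (real s)" "log 2 (real (min s n)) \<le> log 2 (real n)"
      using minpos by (simp_all add: log_le_cancel_iff)
    show ?thesis
    proof (cases "K = 0")
      case True
      have "real (M + Ks + 2*K) = real M + real Ks" using True by simp
      thus ?thesis using Mr lfrac Ksr mle logn by linarith
    next
      case False
      hence "\<not> ((n-1) div (s*M) < 2^(K-1))"
        using not_less_Least[of "K - 1" "\<lambda>k. (n-1) div (s*M) < 2^k"] unfolding K_def by simp
      hence "2^(K-1) \<le> (n-1) div (s*M)" by simp
      hence "2^(K-1) * (s*M) \<le> (n-1) div (s*M) * (s*M)" by (rule mult_le_mono1)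
      also have "\<dots> \<le> n - 1" by (rule div_times_less_eq_dividend)
      finally have "2^(K-1) * (s*M) \<le> n" by simp
      hence "real (2^(K-1) * (s*M)) \<le> real n" by (rule of_nat_mono)
      hence r: "(2::real)^(K-1) * real s * real M \<le> real n" by (simp add: mult.assoc)
      have Mpos: "real M > 0" using M3 by simp
      have "log 2 ((2::real)^(K-1) * real s * real M) = real (K-1) + log 2 (real s) + log 2 (real M)"
        using spos Mpos by (simp add: log_mult_pos log_pow_cancel)
      moreover have "log 2 ((2::real)^(K-1) * real s * real M) \<le> log 2 (real n)"
        using r spos Mpos n2 by (subst log_le_cancel_iff) auto
      ultimately have Kr: "real (K-1) + log 2 (real s) + log 2 (real M) \<le> log 2 (real n)" by simp
      have logM: "2 * log 2 (real M) \<ge> 3"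
      proof -
        have "3 * 3 \<le> M * M" by (rule mult_le_mono[OF M3 M3])
        hence "2^3 \<le> M^2" by (simp add: power2_eq_square)
        hence "real 3 \<le> log 2 (real (M^2))" by (rule le_log2_of_power)
        also have "\<dots> = 2 * log 2 (real M)" by (simp add: log_nat_power)
        finally show ?thesis by simp
      qed
      have "real (M + Ks + 2*K) = real M + real Ks + 2 * (real (K-1) + 1)" using False by simp
      thus ?thesis using Mr lfrac Ksr mle Kr logM logs by linarith
    qed
  qed
  show ?thesis using rows solves bound len by (intro exI[of _ C]) simp
qed
end
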